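(* A uniform preorder $(A,R)$ is a discrete combinatory object (i.e. every relation $r\in R$ is single-valued) if and only if the generic predicate $\mathrm{id}_A\in\mathsf{fam}(A,R)(A)$ is discrete.
   Context: A uniform preorder is a pair $(A,R)$ with $A$ a set and $R\subseteq P(A\times A)$ such that $\mathrm{id}_A\in R$, $s\circ r\in R$ whenever $r,s\in R$, and $s\in R$ whenever $r\in R$ and $s\subseteq r$. $\mathsf{fam}(A,R)$ is the indexed preorder (pseudofunctor $\mathsf{Set}^{op}\to\mathsf{Ord}$) with $\mathsf{fam}(A,R)(I)=(A^I,\le)$, $\varphi\le\psi$ iff $\{(\varphi i,\psi i)\mid i\in I\}\in R$, and reindexing $f^*$ by precomposition. A predicate $\delta\in\mathcal{A}(I)$ of an indexed preorder $\mathcal{A}$ is discrete if for every surjection $e:K\to J$, function $f:K\to I$ and predicate $\varphi\in\mathcal{A}(J)$ with $e^*\varphi\le f^*\delta$, there exists a (necessarily unique) $g:J\to I$ with $g\circ e=f$. *)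

theory Defs
  imports "HOL-Library.FuncSet"
begin

definition uniform_preorder :: "'a set \<Rightarrow> ('a \<times> 'a) set set \<Rightarrow> bool" where
  "uniform_preorder A R \<longleftrightarrow>
     (\<forall>r\<in>R. r \<subseteq> A \<times> A) \<and>
     Id_on A \<in> R \<and>
     (\<forall>r\<in>R. \<forall>s\<in>R. r O s \<in> R) \<and>
     (\<forall>r\<in>R. \<forall>s. s \<subseteq> r \<longrightarrow> s \<in> R)"

definition discrete_combinatory_object :: "('a \<times> 'a) set set \<Rightarrow> bool" where
  "discrete_combinatory_object R \<longleftrightarrow> (\<forall>r\<in>R. single_valued r)"

definition fam_le :: "('a \<times> 'a) set set \<Rightarrow> 'i set \<Rightarrow> ('i \<Rightarrow> 'a) \<Rightarrow> ('i \<Rightarrow> 'a) \<Rightarrow> bool" where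
  "fam_le R I \<phi> \<psi> \<longleftrightarrow> {(\<phi> i, \<psi> i) | i. i \<in> I} \<in> R"

text \<open>Discrete predicate \<delta> in fam(A,R)(I), where the index sets K, J range over
subsets of the types 'k, 'j (given by the itself-arguments).  Reindexing is precomposition.\<close>
definition fam_discrete ::
  "'k itself \<Rightarrow> 'j itself \<Rightarrow> 'a set \<Rightarrow> ('a \<times> 'a) set set \<Rightarrow> 'i set \<Rightarrow> ('i \<Rightarrow> 'a) \<Rightarrow> bool" where
  "fam_discrete TK TJ A R I \<delta> \<longleftrightarrow>
     \<delta> \<in> I \<rightarrow> A \<and>
     (\<forall>(K::'k set) (J::'j set) e f \<phi>.
        e \<in> K \<rightarrow> J \<and> e ` K = J \<and> f \<in> K \<rightarrow> I \<and> \<phi> \<in> J \<rightarrow> A \<and>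
        fam_le R K (\<phi> \<circ> e) (\<delta> \<circ> f)
        \<longrightarrow> (\<exists>g. g \<in> J \<rightarrow> I \<and> (\<forall>k\<in>K. g (e k) = f k)))"

end

theory Submission
  imports Defs
begin

theorem proposition8p3:
  fixes A :: "'a set" and R :: "('a \<times> 'a) set set"
  assumes "uniform_preorder A R"
  shows "(discrete_combinatory_object R \<longrightarrow> fam_discrete TYPE('k) TYPE('j) A R A (\<lambda>x. x))
       \<and> (fam_discrete TYPE(nat) TYPE(nat) A R A (\<lambda>x. x) \<longrightarrow> discrete_combinatory_object R)"
proof (intro conjI impI)
  assume D: "discrete_combinatory_object R"
  show "fam_discrete TYPE('k) TYPE('j) A R A (\<lambda>x. x)"
    unfolding fam_discrete_def
  proof (intro conjI allI impI)
    show "(\<lambda>x. x) \<in> A \<rightarrow> A" by auto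
  next
    fix K :: "'k set" and J :: "'j set" and e f \<phi>
    assume H: "e \<in> K \<rightarrow> J \<and> e ` K = J \<and> f \<in> K \<rightarrow> A \<and> \<phi> \<in> J \<rightarrow> A \<and>
        fam_le R K (\<phi> \<circ> e) ((\<lambda>x. x) \<circ> f)"
    let ?r = "{((\<phi> \<circ> e) i, ((\<lambda>x. x) \<circ> f) i) | i. i \<in> K}"
    have rR: "?r \<in> R" using H unfolding fam_le_def by blast
    hence sv: "single_valued ?r" using D unfolding discrete_combinatory_object_def by blast
    define g where "g = (\<lambda>j. f (SOME k. k \<in> K \<and> e k = j))"
    have geq: "g (e k) = f k" if k: "k \<in> K" for k
    proof -
      have ex: "\<exists>k'. k' \<in> K \<and> e k' = e k" using k by blast
      let ?k = "SOME k'. k' \<in> K \<and> e k' = e k"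
      have k': "?k \<in> K \<and> e ?k = e k" using someI_ex[OF ex] .
      have "(\<phi> (e k), f ?k) \<in> ?r" using k' by (auto intro!: exI[of _ ?k])
      moreover have "(\<phi> (e k), f k) \<in> ?r" using k by auto
      ultimately have "f ?k = f k" using sv unfolding single_valued_def by blast
      thus ?thesis unfolding g_def by simp
    qed
    show "\<exists>g. g \<in> J \<rightarrow> A \<and> (\<forall>k\<in>K. g (e k) = f k)"
    proof (intro exI conjI ballI)
      show "g \<in> J \<rightarrow> A"
      proof
        fix j assume "j \<in> J"
        moreover have "e ` K = J" using H by simp
        ultimately obtain k where "k \<in> K" "j = e k" by blast
        moreover have "f \<in> K \<rightarrow> A" using H by simp
        ultimately show "g j \<in> A" using geq by auto
      qed
    qed (rule geq)
  qed
next
  assume F: "fam_discrete TYPE(nat) TYPE(nat) A R A (\<lambda>x. x)"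
  show "discrete_combinatory_object R"
    unfolding discrete_combinatory_object_def single_valued_def
  proof (intro ballI allI impI)
    fix r a b c assume r: "r \<in> R" and ab: "(a, b) \<in> r" and ac: "(a, c) \<in> r"
    have U: "(\<forall>r\<in>R. r \<subseteq> A \<times> A) \<and> (\<forall>r\<in>R. \<forall>s. s \<subseteq> r \<longrightarrow> s \<in> R)"
      using assms unfolding uniform_preorder_def by simp
    have sub: "r \<subseteq> A \<times> A" using U r by simp
    have down: "\<And>s. s \<subseteq> r \<Longrightarrow> s \<in> R" using U r by simp
    have A: "a \<in> A" "b \<in> A" "c \<in> A" using sub ab ac by auto
    define K :: "nat set" where "K = {0, 1}"
    define J :: "nat set" where "J = {0}"
    define e :: "nat \<Rightarrow> nat" where "e = (\<lambda>_. 0)"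
    define f :: "nat \<Rightarrow> 'a" where "f = (\<lambda>n. if n = 0 then b else c)"
    define \<phi> :: "nat \<Rightarrow> 'a" where "\<phi> = (\<lambda>_. a)"
    have "{((\<phi> \<circ> e) i, ((\<lambda>x. x) \<circ> f) i) | i. i \<in> K} \<subseteq> r"
      using ab ac by (auto simp: K_def \<phi>_def e_def f_def)
    hence le: "fam_le R K (\<phi> \<circ> e) ((\<lambda>x. x) \<circ> f)" unfolding fam_le_def using down by blast
    have "e \<in> K \<rightarrow> J \<and> e ` K = J \<and> f \<in> K \<rightarrow> A \<and> \<phi> \<in> J \<rightarrow> A"
      using A by (auto simp: K_def J_def e_def f_def \<phi>_def)
    with le have pre: "e \<in> K \<rightarrow> J \<and> e ` K = J \<and> f \<in> K \<rightarrow> A \<and> \<phi> \<in> J \<rightarrow> A \<and>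
        fam_le R K (\<phi> \<circ> e) ((\<lambda>x. x) \<circ> f)" by simp
    have "\<exists>g. g \<in> J \<rightarrow> A \<and> (\<forall>k\<in>K. g (e k) = f k)"
      using F pre unfolding fam_discrete_def by (elim conjE allE impE) simp_all
    then obtain g where "\<forall>k\<in>K. g (e k) = f k" by blast
    hence "g 0 = b" "g 0 = c" by (auto simp: K_def e_def f_def)
    thus "b = c" by simp
  qed
qed

end
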